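(* Let $\mathcal T$ be a triangulated category, $X\in\mathcal T$ and $n\ge0$ such that $\operatorname{thick}^{n+1}(X)=\mathcal T$. Put $Y=X\oplus\Sigma^nX$. Then $\hom^p(Y)\subseteq\operatorname{thick}^p(Y)$ for all $p\ge0$. Consequently, if moreover every object of $\mathcal T$ is homologically finite, then $Y$ is a finitistic generator of $\mathcal T$.
   Context: $\Sigma$ denotes the suspension. With $\operatorname{add}\mathcal X$ the smallest full subcategory containing $\mathcal X$ closed under finite direct sums and direct summands, set $\operatorname{thick}^0(X)=\operatorname{add}\varnothing$, $\operatorname{thick}^1(X)=\operatorname{add}\{\Sigma^iX\mid i\in\mathbb Z\}$, and for $n>1$, $\operatorname{thick}^n(X)=\operatorname{add}\{\operatorname{cone}\varphi\mid\varphi\colon U\to V,\ U\in\operatorname{thick}^1(X),\ V\in\operatorname{thick}^{n-1}(X)\}$. For objects $X,Y$ and $n\ge0$, write $h(X,Y)\le n$ if for all $i,j\in\mathbb Z$: $\operatorname{Hom}(X,\Sigma^iY)\ne0\ne\operatorname{Hom}(X,\Sigma^jY)$ implies $|i-j|<n$; $\hom^n(X):=\{Z\mid h(X,Z)\le n\}$. $X$ is homologically finite if for every $Z$ there is $n$ with $h(X,Z)\le n$. $X$ is a finitistic generator if $X$ is homologically finite and $\hom^p(X)\subseteq\operatorname{thick}^p(X)$ for all $p\ge0$. *)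

theory Defs
  imports Main
begin

text \<open>A category given by a carrier of objects and arrows with source/target,
  additive structure on Hom-sets, a suspension functor and a class of
  distinguished triangles (X, Y, Z, u, v, w) meaning X -u-> Y -v-> Z -w-> Sigma X.\<close>

record ('o, 'm) tcat =
  Ob   :: "'o set"
  Ar   :: "'m set"
  src  :: "'m \<Rightarrow> 'o"
  tgt  :: "'m \<Rightarrow> 'o"
  comp :: "'m \<Rightarrow> 'm \<Rightarrow> 'm"   (* comp g f = g after f *)
  idm  :: "'o \<Rightarrow> 'm"
  plus :: "'m \<Rightarrow> 'm \<Rightarrow> 'm"
  neg  :: "'m \<Rightarrow> 'm"
  zer  :: "'o \<Rightarrow> 'o \<Rightarrow> 'm"
  Sig  :: "'o \<Rightarrow> 'o"
  SigA :: "'m \<Rightarrow> 'm"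
  Tri  :: "('o \<times> 'o \<times> 'o \<times> 'm \<times> 'm \<times> 'm) set"

definition Hom :: "('o,'m) tcat \<Rightarrow> 'o \<Rightarrow> 'o \<Rightarrow> 'm set" where
  "Hom C x y = {f \<in> Ar C. src C f = x \<and> tgt C f = y}"

definition category :: "('o,'m) tcat \<Rightarrow> bool" where
  "category C \<longleftrightarrow>
     (\<forall>f\<in>Ar C. src C f \<in> Ob C \<and> tgt C f \<in> Ob C) \<and>
     (\<forall>x\<in>Ob C. idm C x \<in> Hom C x x) \<and>
     (\<forall>x y z f g. f \<in> Hom C x y \<longrightarrow> g \<in> Hom C y z \<longrightarrow> comp C g f \<in> Hom C x z) \<and>
     (\<forall>x y f. f \<in> Hom C x y \<longrightarrow> comp C f (idm C x) = f \<and> comp C (idm C y) f = f) \<and>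
     (\<forall>w x y z f g h. f \<in> Hom C w x \<longrightarrow> g \<in> Hom C x y \<longrightarrow> h \<in> Hom C y z \<longrightarrow>
        comp C h (comp C g f) = comp C (comp C h g) f)"

definition is_zero :: "('o,'m) tcat \<Rightarrow> 'o \<Rightarrow> bool" where
  "is_zero C z \<longleftrightarrow> z \<in> Ob C \<and>
     (\<forall>x\<in>Ob C. Hom C z x = {zer C z x} \<and> Hom C x z = {zer C x z})"

definition biprod :: "('o,'m) tcat \<Rightarrow> 'o \<Rightarrow> 'o \<Rightarrow> 'o \<Rightarrow> 'm \<Rightarrow> 'm \<Rightarrow> 'm \<Rightarrow> 'm \<Rightarrow> bool" where
  "biprod C A B S i1 i2 p1 p2 \<longleftrightarrow>
     A \<in> Ob C \<and> B \<in> Ob C \<and> S \<in> Ob C \<and>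
     i1 \<in> Hom C A S \<and> i2 \<in> Hom C B S \<and> p1 \<in> Hom C S A \<and> p2 \<in> Hom C S B \<and>
     comp C p1 i1 = idm C A \<and> comp C p2 i2 = idm C B \<and>
     comp C p2 i1 = zer C A B \<and> comp C p1 i2 = zer C B A \<and>
     plus C (comp C i1 p1) (comp C i2 p2) = idm C S"

definition additive :: "('o,'m) tcat \<Rightarrow> bool" where
  "additive C \<longleftrightarrow> category C \<and>
     (\<forall>x\<in>Ob C. \<forall>y\<in>Ob C.
        zer C x y \<in> Hom C x y \<and>
        (\<forall>f\<in>Hom C x y. \<forall>g\<in>Hom C x y. plus C f g \<in> Hom C x y) \<and>
        (\<forall>f\<in>Hom C x y. neg C f \<in> Hom C x y) \<and>
        (\<forall>f\<in>Hom C x y. \<forall>g\<in>Hom C x y. \<forall>h\<in>Hom C x y.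
           plus C (plus C f g) h = plus C f (plus C g h)) \<and>
        (\<forall>f\<in>Hom C x y. \<forall>g\<in>Hom C x y. plus C f g = plus C g f) \<and>
        (\<forall>f\<in>Hom C x y. plus C f (zer C x y) = f) \<and>
        (\<forall>f\<in>Hom C x y. plus C f (neg C f) = zer C x y)) \<and>
     (\<forall>x y z f g h. f \<in> Hom C x y \<longrightarrow> g \<in> Hom C x y \<longrightarrow> h \<in> Hom C y z \<longrightarrow>
        comp C h (plus C f g) = plus C (comp C h f) (comp C h g)) \<and>
     (\<forall>x y z f g h. f \<in> Hom C y z \<longrightarrow> g \<in> Hom C y z \<longrightarrow> h \<in> Hom C x y \<longrightarrow>
        comp C (plus C f g) h = plus C (comp C f h) (comp C g h)) \<and>
     (\<exists>z. is_zero C z) \<and>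
     (\<forall>A\<in>Ob C. \<forall>B\<in>Ob C. \<exists>S i1 i2 p1 p2. biprod C A B S i1 i2 p1 p2)"

definition iso :: "('o,'m) tcat \<Rightarrow> 'o \<Rightarrow> 'o \<Rightarrow> bool" where
  "iso C x y \<longleftrightarrow> (\<exists>f\<in>Hom C x y. \<exists>g\<in>Hom C y x.
      comp C g f = idm C x \<and> comp C f g = idm C y)"

definition susp_equiv :: "('o,'m) tcat \<Rightarrow> bool" where
  "susp_equiv C \<longleftrightarrow>
     (\<forall>x\<in>Ob C. Sig C x \<in> Ob C) \<and>
     (\<forall>x y f. f \<in> Hom C x y \<longrightarrow> SigA C f \<in> Hom C (Sig C x) (Sig C y)) \<and>
     (\<forall>x\<in>Ob C. SigA C (idm C x) = idm C (Sig C x)) \<and>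
     (\<forall>x y z f g. f \<in> Hom C x y \<longrightarrow> g \<in> Hom C y z \<longrightarrow>
        SigA C (comp C g f) = comp C (SigA C g) (SigA C f)) \<and>
     (\<forall>x y f g. f \<in> Hom C x y \<longrightarrow> g \<in> Hom C x y \<longrightarrow>
        SigA C (plus C f g) = plus C (SigA C f) (SigA C g)) \<and>
     (\<forall>x\<in>Ob C. \<forall>y\<in>Ob C. bij_betw (SigA C) (Hom C x y) (Hom C (Sig C x) (Sig C y))) \<and>
     (\<forall>y\<in>Ob C. \<exists>x\<in>Ob C. iso C (Sig C x) y)"

definition is_triangle :: "('o,'m) tcat \<Rightarrow> ('o \<times> 'o \<times> 'o \<times> 'm \<times> 'm \<times> 'm) \<Rightarrow> bool" where
  "is_triangle C T \<longleftrightarrow> (case T of (X, Y, Z, u, v, w) \<Rightarrow>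
      u \<in> Hom C X Y \<and> v \<in> Hom C Y Z \<and> w \<in> Hom C Z (Sig C X))"

definition is_iso_arr :: "('o,'m) tcat \<Rightarrow> 'm \<Rightarrow> bool" where
  "is_iso_arr C f \<longleftrightarrow> f \<in> Ar C \<and> (\<exists>g\<in>Hom C (tgt C f) (src C f).
      comp C g f = idm C (src C f) \<and> comp C f g = idm C (tgt C f))"

definition triangulated :: "('o,'m) tcat \<Rightarrow> bool" where
  "triangulated C \<longleftrightarrow> additive C \<and> susp_equiv C \<and>
     \<comment> \<open>distinguished triangles are triangles\<close>
     (\<forall>T\<in>Tri C. is_triangle C T) \<and>
     \<comment> \<open>TR1: closed under isomorphism of triangles\<close>
     (\<forall>X Y Z u v w X' Y' Z' u' v' w' a b c.
        (X, Y, Z, u, v, w) \<in> Tri C \<longrightarrow> is_triangle C (X', Y', Z', u', v', w') \<longrightarrow>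
        a \<in> Hom C X X' \<longrightarrow> b \<in> Hom C Y Y' \<longrightarrow> c \<in> Hom C Z Z' \<longrightarrow>
        is_iso_arr C a \<longrightarrow> is_iso_arr C b \<longrightarrow> is_iso_arr C c \<longrightarrow>
        comp C b u = comp C u' a \<longrightarrow> comp C c v = comp C v' b \<longrightarrow>
        comp C (SigA C a) w = comp C w' c \<longrightarrow>
        (X', Y', Z', u', v', w') \<in> Tri C) \<and>
     \<comment> \<open>TR1: X -id-> X -> 0 -> Sigma X is distinguished\<close>
     (\<forall>X\<in>Ob C. \<forall>z. is_zero C z \<longrightarrow>
        (X, X, z, idm C X, zer C X z, zer C z (Sig C X)) \<in> Tri C) \<and>
     \<comment> \<open>TR1: every morphism extends to a distinguished triangle\<close>
     (\<forall>X Y u. u \<in> Hom C X Y \<longrightarrow> (\<exists>Z v w. (X, Y, Z, u, v, w) \<in> Tri C)) \<and>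
     \<comment> \<open>TR2: rotation\<close>
     (\<forall>X Y Z u v w. (X, Y, Z, u, v, w) \<in> Tri C \<longrightarrow>
        (Y, Z, Sig C X, v, w, neg C (SigA C u)) \<in> Tri C) \<and>
     \<comment> \<open>TR3: completion of morphisms of triangles\<close>
     (\<forall>X Y Z u v w X' Y' Z' u' v' w' a b.
        (X, Y, Z, u, v, w) \<in> Tri C \<longrightarrow> (X', Y', Z', u', v', w') \<in> Tri C \<longrightarrow>
        a \<in> Hom C X X' \<longrightarrow> b \<in> Hom C Y Y' \<longrightarrow> comp C b u = comp C u' a \<longrightarrow>
        (\<exists>c\<in>Hom C Z Z'. comp C c v = comp C v' b \<and> comp C (SigA C a) w = comp C w' c)) \<and>
     \<comment> \<open>TR4: octahedral axiom\<close>
     (\<forall>X Y Z u v Z' i i' X' j j' Y' k k'.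
        u \<in> Hom C X Y \<longrightarrow> v \<in> Hom C Y Z \<longrightarrow>
        (X, Y, Z', u, i, i') \<in> Tri C \<longrightarrow>
        (Y, Z, X', v, j, j') \<in> Tri C \<longrightarrow>
        (X, Z, Y', comp C v u, k, k') \<in> Tri C \<longrightarrow>
        (\<exists>f\<in>Hom C Z' Y'. \<exists>g\<in>Hom C Y' X'.
           (Z', Y', X', f, g, comp C (SigA C i) j') \<in> Tri C \<and>
           comp C f i = comp C k v \<and> comp C k' f = i' \<and>
           comp C g k = j \<and> comp C j' g = comp C (SigA C u) k'))"

text \<open>Objects isomorphic to Sigma^i Y (i an integer); for negative i,
  Sigma^i Y is the class of Z with Sigma^(-i) Z isomorphic to Y.\<close>
definition shifts :: "('o,'m) tcat \<Rightarrow> int \<Rightarrow> 'o \<Rightarrow> 'o set" where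
  "shifts C i Y = (if 0 \<le> i then {Z \<in> Ob C. iso C Z ((Sig C ^^ nat i) Y)}
                   else {Z \<in> Ob C. iso C ((Sig C ^^ nat (- i)) Z) Y})"

definition hom_nz :: "('o,'m) tcat \<Rightarrow> 'o \<Rightarrow> int \<Rightarrow> 'o \<Rightarrow> bool" where
  "hom_nz C X i Y \<longleftrightarrow> (\<exists>Z\<in>shifts C i Y. \<exists>f\<in>Hom C X Z. f \<noteq> zer C X Z)"

inductive_set addc :: "('o,'m) tcat \<Rightarrow> 'o set \<Rightarrow> 'o set" for C Xs where
  zero: "is_zero C z \<Longrightarrow> z \<in> addc C Xs"
| base: "x \<in> Xs \<Longrightarrow> x \<in> Ob C \<Longrightarrow> x \<in> addc C Xs"
| sum: "A \<in> addc C Xs \<Longrightarrow> B \<in> addc C Xs \<Longrightarrow> biprod C A B S i1 i2 p1 p2 \<Longrightarrow> S \<in> addc C Xs"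
| summand: "S \<in> addc C Xs \<Longrightarrow> biprod C A B S i1 i2 p1 p2 \<Longrightarrow> A \<in> addc C Xs"

definition cones :: "('o,'m) tcat \<Rightarrow> 'o \<Rightarrow> 'o \<Rightarrow> 'o set" where
  "cones C U V = {Z. \<exists>phi\<in>Hom C U V. \<exists>v w. (U, V, Z, phi, v, w) \<in> Tri C}"

fun thick :: "('o,'m) tcat \<Rightarrow> 'o \<Rightarrow> nat \<Rightarrow> 'o set" where
  "thick C X 0 = addc C {}"
| "thick C X (Suc 0) = addc C (\<Union>i. shifts C i X)"
| "thick C X (Suc (Suc n)) = addc C {Z. \<exists>U V. U \<in> thick C X (Suc 0) \<and>
       V \<in> thick C X (Suc n) \<and> Z \<in> cones C U V}"

definition hle :: "('o,'m) tcat \<Rightarrow> 'o \<Rightarrow> 'o \<Rightarrow> nat \<Rightarrow> bool" where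
  "hle C X Y n \<longleftrightarrow> (\<forall>i j. hom_nz C X i Y \<and> hom_nz C X j Y \<longrightarrow> \<bar>i - j\<bar> < int n)"

definition homset :: "('o,'m) tcat \<Rightarrow> 'o \<Rightarrow> nat \<Rightarrow> 'o set" where
  "homset C X n = {Z \<in> Ob C. hle C X Z n}"

definition homologically_finite :: "('o,'m) tcat \<Rightarrow> 'o \<Rightarrow> bool" where
  "homologically_finite C X \<longleftrightarrow> (\<forall>Z\<in>Ob C. \<exists>n. hle C X Z n)"

definition finitistic_generator :: "('o,'m) tcat \<Rightarrow> 'o \<Rightarrow> bool" where
  "finitistic_generator C X \<longleftrightarrow> homologically_finite C X \<and>
     (\<forall>p. homset C X p \<subseteq> thick C X p)"

end

theory Submission imports Defs begin

locale TC = fixes C :: "('o,'m) tcat" assumes tri: "triangulated C"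
begin

lemma add: "additive C" and se: "susp_equiv C"
  using tri unfolding triangulated_def by simp_all
lemma cat: "category C" using add unfolding additive_def by simp

lemma HomD: "f \<in> Hom C x y \<Longrightarrow> f \<in> Ar C \<and> src C f = x \<and> tgt C f = y"
  by (simp add: Hom_def)

lemma Hom_ob: "f \<in> Hom C x y \<Longrightarrow> x \<in> Ob C \<and> y \<in> Ob C"
  using cat unfolding category_def Hom_def by auto

lemma comp_Hom: "f \<in> Hom C x y \<Longrightarrow> g \<in> Hom C y z \<Longrightarrow> comp C g f \<in> Hom C x z"
  using cat unfolding category_def by blast

lemma id_Hom: "x \<in> Ob C \<Longrightarrow> idm C x \<in> Hom C x x"
  using cat unfolding category_def by blast

lemma comp_id_r: "f \<in> Hom C x y \<Longrightarrow> comp C f (idm C x) = f"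
  using cat unfolding category_def by blast

lemma comp_id_l: "f \<in> Hom C x y \<Longrightarrow> comp C (idm C y) f = f"
  using cat unfolding category_def by blast

lemma assoc: "f \<in> Hom C w x \<Longrightarrow> g \<in> Hom C x y \<Longrightarrow> h \<in> Hom C y z \<Longrightarrow>
   comp C h (comp C g f) = comp C (comp C h g) f"
  using cat unfolding category_def by blast

lemma addD: assumes "x \<in> Ob C" "y \<in> Ob C" shows "zer C x y \<in> Hom C x y \<and>
        (\<forall>f\<in>Hom C x y. \<forall>g\<in>Hom C x y. plus C f g \<in> Hom C x y) \<and>
        (\<forall>f\<in>Hom C x y. neg C f \<in> Hom C x y) \<and>
        (\<forall>f\<in>Hom C x y. \<forall>g\<in>Hom C x y. \<forall>h\<in>Hom C x y.
           plus C (plus C f g) h = plus C f (plus C g h)) \<and>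
        (\<forall>f\<in>Hom C x y. \<forall>g\<in>Hom C x y. plus C f g = plus C g f) \<and>
        (\<forall>f\<in>Hom C x y. plus C f (zer C x y) = f) \<and>
        (\<forall>f\<in>Hom C x y. plus C f (neg C f) = zer C x y)"
proof -
  have "\<forall>x\<in>Ob C. \<forall>y\<in>Ob C. zer C x y \<in> Hom C x y \<and>
        (\<forall>f\<in>Hom C x y. \<forall>g\<in>Hom C x y. plus C f g \<in> Hom C x y) \<and>
        (\<forall>f\<in>Hom C x y. neg C f \<in> Hom C x y) \<and>
        (\<forall>f\<in>Hom C x y. \<forall>g\<in>Hom C x y. \<forall>h\<in>Hom C x y.
           plus C (plus C f g) h = plus C f (plus C g h)) \<and>
        (\<forall>f\<in>Hom C x y. \<forall>g\<in>Hom C x y. plus C f g = plus C g f) \<and>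
        (\<forall>f\<in>Hom C x y. plus C f (zer C x y) = f) \<and>
        (\<forall>f\<in>Hom C x y. plus C f (neg C f) = zer C x y)"
    using add unfolding additive_def by (elim conjE) assumption
  from bspec[OF bspec[OF this assms(1)] assms(2)] show ?thesis .
qed

lemma zer_Hom: "x \<in> Ob C \<Longrightarrow> y \<in> Ob C \<Longrightarrow> zer C x y \<in> Hom C x y"
  by (rule conjunct1[OF addD])
lemma addD': "f \<in> Hom C x y \<Longrightarrow>
        (\<forall>f\<in>Hom C x y. \<forall>g\<in>Hom C x y. plus C f g \<in> Hom C x y) \<and>
        (\<forall>f\<in>Hom C x y. neg C f \<in> Hom C x y) \<and>
        (\<forall>f\<in>Hom C x y. \<forall>g\<in>Hom C x y. \<forall>h\<in>Hom C x y.
           plus C (plus C f g) h = plus C f (plus C g h)) \<and>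
        (\<forall>f\<in>Hom C x y. \<forall>g\<in>Hom C x y. plus C f g = plus C g f) \<and>
        (\<forall>f\<in>Hom C x y. plus C f (zer C x y) = f) \<and>
        (\<forall>f\<in>Hom C x y. plus C f (neg C f) = zer C x y)"
proof -
  assume "f \<in> Hom C x y"
  hence "x \<in> Ob C" "y \<in> Ob C" using Hom_ob by auto
  from addD[OF this] show ?thesis by (elim conjE) (intro conjI; assumption)
qed
lemma plus_Hom: "f \<in> Hom C x y \<Longrightarrow> g \<in> Hom C x y \<Longrightarrow> plus C f g \<in> Hom C x y"
  using addD' by blast
lemma neg_Hom: "f \<in> Hom C x y \<Longrightarrow> neg C f \<in> Hom C x y"
  using addD' by blast
lemma plus_assoc: "f \<in> Hom C x y \<Longrightarrow> g \<in> Hom C x y \<Longrightarrow> h \<in> Hom C x y \<Longrightarrow>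
  plus C (plus C f g) h = plus C f (plus C g h)"
  using addD' by blast
lemma plus_comm: "f \<in> Hom C x y \<Longrightarrow> g \<in> Hom C x y \<Longrightarrow> plus C f g = plus C g f"
  using addD' by blast
lemma plus_zer: "f \<in> Hom C x y \<Longrightarrow> plus C f (zer C x y) = f"
  using addD' by blast
lemma plus_neg: "f \<in> Hom C x y \<Longrightarrow> plus C f (neg C f) = zer C x y"
  using addD' by blast

lemma distL: "f \<in> Hom C x y \<Longrightarrow> g \<in> Hom C x y \<Longrightarrow> h \<in> Hom C y z \<Longrightarrow>
        comp C h (plus C f g) = plus C (comp C h f) (comp C h g)"
  using add unfolding additive_def by blast
lemma distR: "f \<in> Hom C y z \<Longrightarrow> g \<in> Hom C y z \<Longrightarrow> h \<in> Hom C x y \<Longrightarrow>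
        comp C (plus C f g) h = plus C (comp C f h) (comp C g h)"
  using add unfolding additive_def by blast
lemma zero_ex: "\<exists>z. is_zero C z"
  using add unfolding additive_def by blast
lemma biprod_ex: "A \<in> Ob C \<Longrightarrow> B \<in> Ob C \<Longrightarrow> \<exists>S i1 i2 p1 p2. biprod C A B S i1 i2 p1 p2"
  using add unfolding additive_def by blast

lemma plus_zer_l: "f \<in> Hom C x y \<Longrightarrow> plus C (zer C x y) f = f"
  by (metis Hom_ob plus_comm plus_zer zer_Hom)

lemma idem_zer: assumes a: "a \<in> Hom C x y" and e: "plus C a a = a" shows "a = zer C x y"
proof -
  have n: "neg C a \<in> Hom C x y" using neg_Hom a .
  have "zer C x y = plus C a (neg C a)" using plus_neg a by simp
  also have "\<dots> = plus C (plus C a a) (neg C a)" using e by simp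
  also have "\<dots> = plus C a (plus C a (neg C a))" using plus_assoc a n by blast
  also have "\<dots> = a" using plus_neg plus_zer a by simp
  finally show ?thesis by simp
qed

lemma neg_unique: assumes a: "a \<in> Hom C x y" and b: "b \<in> Hom C x y" and e: "plus C a b = zer C x y"
  shows "b = neg C a"
proof -
  have n: "neg C a \<in> Hom C x y" using neg_Hom a .
  have "b = plus C b (plus C a (neg C a))" using plus_neg plus_zer a b by simp
  also have "\<dots> = plus C (plus C b a) (neg C a)" using plus_assoc[OF b a n] by simp
  also have "\<dots> = neg C a" using e plus_comm[OF a b] plus_zer_l[OF n] by simp
  finally show ?thesis .
qed

lemma comp_zer_r: assumes f: "f \<in> Hom C y z" and x: "x \<in> Ob C"
  shows "comp C f (zer C x y) = zer C x z"
proof -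
  have y: "y \<in> Ob C" "z \<in> Ob C" using Hom_ob f by auto
  have zz: "zer C x y \<in> Hom C x y" using zer_Hom x y by simp
  have "comp C f (zer C x y) = comp C f (plus C (zer C x y) (zer C x y))" using plus_zer zz by simp
  also have "\<dots> = plus C (comp C f (zer C x y)) (comp C f (zer C x y))" using distL zz f by blast
  finally show ?thesis using idem_zer comp_Hom zz f by metis
qed

lemma comp_zer_l: assumes f: "f \<in> Hom C x y" and z: "z \<in> Ob C"
  shows "comp C (zer C y z) f = zer C x z"
proof -
  have y: "x \<in> Ob C" "y \<in> Ob C" using Hom_ob f by auto
  have zz: "zer C y z \<in> Hom C y z" using zer_Hom z y by simp
  have "comp C (zer C y z) f = comp C (plus C (zer C y z) (zer C y z)) f" using plus_zer zz by simp
  also have "\<dots> = plus C (comp C (zer C y z) f) (comp C (zer C y z) f)" using distR zz f by blast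
  finally show ?thesis using idem_zer comp_Hom zz f by metis
qed

lemma neg_zer: "x \<in> Ob C \<Longrightarrow> y \<in> Ob C \<Longrightarrow> neg C (zer C x y) = zer C x y"
  by (metis neg_unique plus_zer zer_Hom)

lemma comp_neg_r: assumes h: "h \<in> Hom C y z" and g: "g \<in> Hom C x y"
  shows "comp C h (neg C g) = neg C (comp C h g)"
proof -
  have n: "neg C g \<in> Hom C x y" using neg_Hom g .
  have "plus C (comp C h g) (comp C h (neg C g)) = comp C h (zer C x y)"
    using distL[OF g n h] plus_neg g by simp
  also have "\<dots> = zer C x z" using comp_zer_r h Hom_ob g by blast
  finally show ?thesis using neg_unique comp_Hom h g n by blast
qed

lemma comp_neg_l: assumes h: "h \<in> Hom C y z" and g: "g \<in> Hom C x y"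
  shows "comp C (neg C h) g = neg C (comp C h g)"
proof -
  have n: "neg C h \<in> Hom C y z" using neg_Hom h .
  have "plus C (comp C h g) (comp C (neg C h) g) = comp C (zer C y z) g"
    using distR[OF h n g] plus_neg h by simp
  also have "\<dots> = zer C x z" using comp_zer_l g Hom_ob h by blast
  finally show ?thesis using neg_unique comp_Hom h g n by blast
qed

lemma neg_neg: assumes f: "f \<in> Hom C x y" shows "neg C (neg C f) = f"
proof -
  have n: "neg C f \<in> Hom C x y" using neg_Hom f .
  have "plus C (neg C f) f = zer C x y" using plus_comm plus_neg f n by metis
  thus ?thesis using neg_unique n f by metis
qed


lemma Sig_Ob: "x \<in> Ob C \<Longrightarrow> Sig C x \<in> Ob C"
  using conjunct1[OF se[unfolded susp_equiv_def]] by blast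
lemma SigA_Hom: "f \<in> Hom C x y \<Longrightarrow> SigA C f \<in> Hom C (Sig C x) (Sig C y)"
  using conjunct1[OF conjunct2[OF se[unfolded susp_equiv_def]]] by blast
lemma SigA_id: "x \<in> Ob C \<Longrightarrow> SigA C (idm C x) = idm C (Sig C x)"
  using conjunct1[OF conjunct2[OF conjunct2[OF se[unfolded susp_equiv_def]]]] by blast
lemma SigA_comp: "f \<in> Hom C x y \<Longrightarrow> g \<in> Hom C y z \<Longrightarrow>
        SigA C (comp C g f) = comp C (SigA C g) (SigA C f)"
  using conjunct1[OF conjunct2[OF conjunct2[OF conjunct2[OF se[unfolded susp_equiv_def]]]]] by blast
lemma SigA_plus: "f \<in> Hom C x y \<Longrightarrow> g \<in> Hom C x y \<Longrightarrow>
        SigA C (plus C f g) = plus C (SigA C f) (SigA C g)"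
  using conjunct1[OF conjunct2[OF conjunct2[OF conjunct2[OF conjunct2[OF se[unfolded susp_equiv_def]]]]]] by blast
lemma SigA_bij: "x \<in> Ob C \<Longrightarrow> y \<in> Ob C \<Longrightarrow> bij_betw (SigA C) (Hom C x y) (Hom C (Sig C x) (Sig C y))"
  using conjunct1[OF conjunct2[OF conjunct2[OF conjunct2[OF conjunct2[OF conjunct2[OF se[unfolded susp_equiv_def]]]]]]] by blast
lemma Sig_ess: "y \<in> Ob C \<Longrightarrow> \<exists>x\<in>Ob C. iso C (Sig C x) y"
  using conjunct2[OF conjunct2[OF conjunct2[OF conjunct2[OF conjunct2[OF conjunct2[OF se[unfolded susp_equiv_def]]]]]]] by blast

lemma SigA_zer: assumes "x \<in> Ob C" "y \<in> Ob C" shows "SigA C (zer C x y) = zer C (Sig C x) (Sig C y)"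
proof -
  have z: "zer C x y \<in> Hom C x y" using zer_Hom assms by simp
  have "SigA C (zer C x y) = SigA C (plus C (zer C x y) (zer C x y))" using plus_zer z by simp
  also have "\<dots> = plus C (SigA C (zer C x y)) (SigA C (zer C x y))" using SigA_plus z by blast
  finally have "plus C (SigA C (zer C x y)) (SigA C (zer C x y)) = SigA C (zer C x y)" by simp
  from idem_zer[OF SigA_Hom[OF z] this] show ?thesis .
qed

lemma SigA_inj: assumes "f \<in> Hom C x y" "g \<in> Hom C x y" "SigA C f = SigA C g" shows "f = g"
proof -
  have "inj_on (SigA C) (Hom C x y)" using SigA_bij Hom_ob[OF assms(1)] unfolding bij_betw_def by blast
  thus ?thesis using assms unfolding inj_on_def by blast
qed
lemma SigA_surj: assumes "h \<in> Hom C (Sig C x) (Sig C y)" "x \<in> Ob C" "y \<in> Ob C" shows "\<exists>f\<in>Hom C x y. SigA C f = h"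
proof -
  have "h \<in> SigA C ` Hom C x y" using SigA_bij[OF assms(2,3)] assms(1) unfolding bij_betw_def by simp
  thus ?thesis by blast
qed

abbreviation S where "S k \<equiv> Sig C ^^ k"
abbreviation SA where "SA k \<equiv> SigA C ^^ k"

lemma S_Ob: "x \<in> Ob C \<Longrightarrow> S k x \<in> Ob C"
  by (induction k) (auto simp: Sig_Ob)
lemma SA_Hom: "f \<in> Hom C x y \<Longrightarrow> SA k f \<in> Hom C (S k x) (S k y)"
  by (induction k) (auto simp: SigA_Hom)
lemma SA_id: "x \<in> Ob C \<Longrightarrow> SA k (idm C x) = idm C (S k x)"
  by (induction k) (auto simp: SigA_id S_Ob)
lemma SA_comp: "f \<in> Hom C x y \<Longrightarrow> g \<in> Hom C y z \<Longrightarrow> SA k (comp C g f) = comp C (SA k g) (SA k f)"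
proof (induction k)
  case (Suc k) thus ?case using SigA_comp[OF SA_Hom[OF Suc(2)] SA_Hom[OF Suc(3)]] by simp
qed simp
lemma SA_plus: "f \<in> Hom C x y \<Longrightarrow> g \<in> Hom C x y \<Longrightarrow> SA k (plus C f g) = plus C (SA k f) (SA k g)"
proof (induction k)
  case (Suc k) thus ?case using SigA_plus[OF SA_Hom[OF Suc(2)] SA_Hom[OF Suc(3)]] by simp
qed simp
lemma SA_zer: "x \<in> Ob C \<Longrightarrow> y \<in> Ob C \<Longrightarrow> SA k (zer C x y) = zer C (S k x) (S k y)"
  by (induction k) (auto simp: SigA_zer S_Ob)
lemma SA_inj: "f \<in> Hom C x y \<Longrightarrow> g \<in> Hom C x y \<Longrightarrow> SA k f = SA k g \<Longrightarrow> f = g"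
proof (induction k)
  case (Suc k)
  have "SigA C (SA k f) = SigA C (SA k g)" using Suc.prems(3) by simp
  from SigA_inj[OF SA_Hom[OF Suc.prems(1)] SA_Hom[OF Suc.prems(2)] this] Suc show ?case by blast
qed simp
lemma SA_surj: "h \<in> Hom C (S k x) (S k y) \<Longrightarrow> x \<in> Ob C \<Longrightarrow> y \<in> Ob C \<Longrightarrow> \<exists>f\<in>Hom C x y. SA k f = h"
proof (induction k arbitrary: h)
  case (Suc k)
  have "h \<in> Hom C (Sig C (S k x)) (Sig C (S k y))" using Suc.prems(1) by simp
  from SigA_surj[OF this S_Ob[OF Suc.prems(2)] S_Ob[OF Suc.prems(3)]]
  obtain g where g: "g \<in> Hom C (S k x) (S k y)" "SigA C g = h" by blast
  from Suc.IH[OF g(1) Suc.prems(2,3)] obtain f where "f \<in> Hom C x y" "SA k f = g" by blast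
  thus ?case using g by auto
qed simp

lemma iso_ob: "iso C x y \<Longrightarrow> x \<in> Ob C \<and> y \<in> Ob C"
  unfolding iso_def using Hom_ob by blast
lemma iso_refl: "x \<in> Ob C \<Longrightarrow> iso C x x"
  unfolding iso_def using id_Hom comp_id_r by blast
lemma iso_sym: "iso C x y \<Longrightarrow> iso C y x"
  unfolding iso_def by blast
lemma iso_trans: assumes "iso C x y" "iso C y z" shows "iso C x z"
proof -
  obtain f g where f: "f \<in> Hom C x y" "g \<in> Hom C y x" "comp C g f = idm C x" "comp C f g = idm C y"
    using assms(1) unfolding iso_def by blast
  obtain f' g' where f': "f' \<in> Hom C y z" "g' \<in> Hom C z y" "comp C g' f' = idm C y" "comp C f' g' = idm C z"
    using assms(2) unfolding iso_def by blast
  have a: "comp C f' f \<in> Hom C x z" using comp_Hom f f' by blast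
  have b: "comp C g g' \<in> Hom C z x" using comp_Hom f f' by blast
  have "comp C (comp C g g') (comp C f' f) = comp C g (comp C g' (comp C f' f))"
    using assoc[OF a f'(2) f(2)] by simp
  also have "comp C g' (comp C f' f) = f" using assoc[OF f(1) f'(1) f'(2)] f'(3) comp_id_l[OF f(1)] by simp
  finally have 1: "comp C (comp C g g') (comp C f' f) = idm C x" using f(3) by simp
  have "comp C (comp C f' f) (comp C g g') = comp C f' (comp C f (comp C g g'))"
    using assoc[OF b f(1) f'(1)] by simp
  also have "comp C f (comp C g g') = g'" using assoc[OF f'(2) f(2) f(1)] f(4) comp_id_l[OF f'(2)] by simp
  finally have 2: "comp C (comp C f' f) (comp C g g') = idm C z" using f'(4) by simp
  show ?thesis unfolding iso_def using 1 2 a b by blast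
qed
lemma iso_SA: assumes "iso C x y" shows "iso C (S k x) (S k y)"
proof -
  obtain f g where f: "f \<in> Hom C x y" "g \<in> Hom C y x" "comp C g f = idm C x" "comp C f g = idm C y"
    using assms(1) unfolding iso_def by blast
  have o: "x \<in> Ob C" "y \<in> Ob C" using Hom_ob f(1) by auto
  have "comp C (SA k g) (SA k f) = idm C (S k x)" using SA_comp[OF f(1) f(2)] f(3) SA_id[OF o(1)] by simp
  moreover have "comp C (SA k f) (SA k g) = idm C (S k y)" using SA_comp[OF f(2) f(1)] f(4) SA_id[OF o(2)] by simp
  ultimately show ?thesis unfolding iso_def using SA_Hom f by blast
qed
lemma iso_SA_refl: assumes "iso C (S k x) (S k y)" "x \<in> Ob C" "y \<in> Ob C" shows "iso C x y"
proof -
  obtain f g where f: "f \<in> Hom C (S k x) (S k y)" "g \<in> Hom C (S k y) (S k x)"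
     "comp C g f = idm C (S k x)" "comp C f g = idm C (S k y)"
    using assms(1) unfolding iso_def by blast
  obtain f' where f': "f' \<in> Hom C x y" "SA k f' = f" using SA_surj f(1) assms by blast
  obtain g' where g': "g' \<in> Hom C y x" "SA k g' = g" using SA_surj f(2) assms by blast
  have "SA k (comp C g' f') = SA k (idm C x)" using SA_comp[OF f'(1) g'(1)] SA_id[OF assms(2)] f' g' f(3) by simp
  hence 1: "comp C g' f' = idm C x" using SA_inj comp_Hom[OF f'(1) g'(1)] id_Hom[OF assms(2)] by blast
  have "SA k (comp C f' g') = SA k (idm C y)" using SA_comp[OF g'(1) f'(1)] SA_id[OF assms(3)] f' g' f(4) by simp
  hence 2: "comp C f' g' = idm C y" using SA_inj comp_Hom[OF g'(1) f'(1)] id_Hom[OF assms(3)] by blast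
  show ?thesis unfolding iso_def using 1 2 f' g' by blast
qed
lemma S_ess: "y \<in> Ob C \<Longrightarrow> \<exists>x\<in>Ob C. iso C (S k x) y"
proof (induction k arbitrary: y)
  case 0 thus ?case using iso_refl by auto
next
  case (Suc k)
  obtain x where x: "x \<in> Ob C" "iso C (Sig C x) y" using Sig_ess Suc by blast
  obtain w where w: "w \<in> Ob C" "iso C (S k w) x" using Suc x by blast
  have "iso C (Sig C (S k w)) (Sig C x)" using iso_SA[OF w(2), of 1] by simp
  thus ?case using w x iso_trans by auto
qed
lemma S_add: "S a (S b x) = S (a + b) x" by (simp add: funpow_add)


lemma biprod_SA: assumes "biprod C A B W i1 i2 p1 p2"
  shows "biprod C (S k A) (S k B) (S k W) (SA k i1) (SA k i2) (SA k p1) (SA k p2)"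
proof -
  from assms have h: "A \<in> Ob C" "B \<in> Ob C" "W \<in> Ob C"
     "i1 \<in> Hom C A W" "i2 \<in> Hom C B W" "p1 \<in> Hom C W A" "p2 \<in> Hom C W B"
     "comp C p1 i1 = idm C A" "comp C p2 i2 = idm C B"
     "comp C p2 i1 = zer C A B" "comp C p1 i2 = zer C B A"
     "plus C (comp C i1 p1) (comp C i2 p2) = idm C W" unfolding biprod_def by auto
  have "comp C (SA k p1) (SA k i1) = idm C (S k A)" using SA_comp[OF h(4) h(6)] h(8) SA_id[OF h(1)] by simp
  moreover have "comp C (SA k p2) (SA k i2) = idm C (S k B)" using SA_comp[OF h(5) h(7)] h(9) SA_id[OF h(2)] by simp
  moreover have "comp C (SA k p2) (SA k i1) = zer C (S k A) (S k B)" using SA_comp[OF h(4) h(7)] h(10) SA_zer[OF h(1) h(2)] by simp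
  moreover have "comp C (SA k p1) (SA k i2) = zer C (S k B) (S k A)" using SA_comp[OF h(5) h(6)] h(11) SA_zer[OF h(2) h(1)] by simp
  moreover have "plus C (comp C (SA k i1) (SA k p1)) (comp C (SA k i2) (SA k p2)) = idm C (S k W)"
    using SA_plus[OF comp_Hom[OF h(6) h(4)] comp_Hom[OF h(7) h(5)]] SA_comp[OF h(6) h(4)] SA_comp[OF h(7) h(5)]
      h(12) SA_id[OF h(3)] by simp
  ultimately show ?thesis unfolding biprod_def using h S_Ob SA_Hom by simp
qed

lemma biprod_tr1: assumes "biprod C A B W i1 i2 p1 p2" "a \<in> Hom C A' A" "a' \<in> Hom C A A'"
  "comp C a' a = idm C A'" "comp C a a' = idm C A"
  shows "biprod C A' B W (comp C i1 a) i2 (comp C a' p1) p2"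
proof -
  from assms(1) have h: "A \<in> Ob C" "B \<in> Ob C" "W \<in> Ob C"
     "i1 \<in> Hom C A W" "i2 \<in> Hom C B W" "p1 \<in> Hom C W A" "p2 \<in> Hom C W B"
     "comp C p1 i1 = idm C A" "comp C p2 i2 = idm C B"
     "comp C p2 i1 = zer C A B" "comp C p1 i2 = zer C B A"
     "plus C (comp C i1 p1) (comp C i2 p2) = idm C W" unfolding biprod_def by auto
  have A': "A' \<in> Ob C" using Hom_ob assms(2) by blast
  have "comp C (comp C a' p1) (comp C i1 a) = comp C a' (comp C p1 (comp C i1 a))"
    using assoc[OF comp_Hom[OF assms(2) h(4)] h(6) assms(3)] by simp
  also have "comp C p1 (comp C i1 a) = a" using assoc[OF assms(2) h(4) h(6)] h(8) comp_id_l[OF assms(2)] by simp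
  finally have 1: "comp C (comp C a' p1) (comp C i1 a) = idm C A'" using assms(4) by simp
  have 2: "comp C p2 (comp C i1 a) = zer C A' B" using assoc[OF assms(2) h(4) h(7)] h(10) comp_zer_l[OF assms(2) h(2)] by simp
  have 3: "comp C (comp C a' p1) i2 = zer C B A'" using assoc[OF h(5) h(6) assms(3)] h(11) comp_zer_r[OF assms(3) h(2)] by simp
  have "comp C (comp C i1 a) (comp C a' p1) = comp C i1 (comp C a (comp C a' p1))"
    using assoc[OF comp_Hom[OF h(6) assms(3)] assms(2) h(4)] by simp
  also have "comp C a (comp C a' p1) = p1" using assoc[OF h(6) assms(3) assms(2)] assms(5) comp_id_l[OF h(6)] by simp
  finally have 4: "plus C (comp C (comp C i1 a) (comp C a' p1)) (comp C i2 p2) = idm C W" using h(12) by simp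
  show ?thesis unfolding biprod_def using 1 2 3 4 h A' comp_Hom assms(2,3) by blast
qed

lemma biprod_swap: "biprod C A B W i1 i2 p1 p2 \<Longrightarrow> biprod C B A W i2 i1 p2 p1"
  unfolding biprod_def using plus_comm comp_Hom by metis

lemma biprod_tr1_iso: assumes "biprod C A B W i1 i2 p1 p2" "iso C A' A"
  shows "\<exists>j1 q1. biprod C A' B W j1 i2 q1 p2"
  using assms(2) biprod_tr1[OF assms(1)] unfolding iso_def by blast

lemma biprod_tr2_iso: assumes "biprod C A B W i1 i2 p1 p2" "iso C B' B"
  shows "\<exists>j2 q2. biprod C A B' W i1 j2 p1 q2"
proof -
  obtain j2 q2 where "biprod C B' A W j2 i1 q2 p1" using biprod_tr1_iso[OF biprod_swap[OF assms(1)] assms(2)] by blast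
  thus ?thesis using biprod_swap by blast
qed

lemma biprod_aux: assumes "biprod C A B W i1 i2 p1 p2" "biprod C A B W' j1 j2 q1 q2"
  shows "comp C (plus C (comp C i1 q1) (comp C i2 q2)) j1 = i1"
proof -
  from assms(1) have h: "A \<in> Ob C" "B \<in> Ob C" "W \<in> Ob C"
     "i1 \<in> Hom C A W" "i2 \<in> Hom C B W" "p1 \<in> Hom C W A" "p2 \<in> Hom C W B"
     unfolding biprod_def by auto
  from assms(2) have k: "W' \<in> Ob C"
     "j1 \<in> Hom C A W'" "j2 \<in> Hom C B W'" "q1 \<in> Hom C W' A" "q2 \<in> Hom C W' B"
     "comp C q1 j1 = idm C A" "comp C q2 j2 = idm C B"
     "comp C q2 j1 = zer C A B" "comp C q1 j2 = zer C B A"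
     unfolding biprod_def by auto
  have "comp C (plus C (comp C i1 q1) (comp C i2 q2)) j1 = plus C (comp C (comp C i1 q1) j1) (comp C (comp C i2 q2) j1)"
    using distR[OF comp_Hom[OF k(4) h(4)] comp_Hom[OF k(5) h(5)] k(2)] .
  also have "comp C (comp C i1 q1) j1 = i1" using assoc[OF k(2) k(4) h(4)] k(6) comp_id_r[OF h(4)] by simp
  also have "comp C (comp C i2 q2) j1 = zer C A W" using assoc[OF k(2) k(5) h(5)] k(8) comp_zer_r[OF h(5) h(1)] by simp
  finally show ?thesis using plus_zer[OF h(4)] by simp
qed

lemma biprod_iso: assumes "biprod C A B W i1 i2 p1 p2" "biprod C A B W' j1 j2 q1 q2"
  shows "iso C W W'"
proof -
  have b1: "biprod C B A W i2 i1 p2 p1" "biprod C B A W' j2 j1 q2 q1" using biprod_swap assms by blast+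
  from assms(1) have h: "A \<in> Ob C" "B \<in> Ob C" "W \<in> Ob C"
     "i1 \<in> Hom C A W" "i2 \<in> Hom C B W" "p1 \<in> Hom C W A" "p2 \<in> Hom C W B"
     "plus C (comp C i1 p1) (comp C i2 p2) = idm C W"
     unfolding biprod_def by auto
  from assms(2) have k: "W' \<in> Ob C"
     "j1 \<in> Hom C A W'" "j2 \<in> Hom C B W'" "q1 \<in> Hom C W' A" "q2 \<in> Hom C W' B"
     "plus C (comp C j1 q1) (comp C j2 q2) = idm C W'"
     unfolding biprod_def by auto
  define phi where "phi = plus C (comp C j1 p1) (comp C j2 p2)"
  define psi where "psi = plus C (comp C i1 q1) (comp C i2 q2)"
  have phi: "phi \<in> Hom C W W'" unfolding phi_def using plus_Hom comp_Hom h k by blast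
  have psi: "psi \<in> Hom C W' W" unfolding psi_def using plus_Hom comp_Hom h k by blast
  have a1: "comp C psi j1 = i1" unfolding psi_def using biprod_aux[OF assms] .
  have a2: "comp C psi j2 = i2" unfolding psi_def using biprod_aux[OF b1] plus_comm comp_Hom h k by metis
  have c1: "comp C phi i1 = j1" unfolding phi_def using biprod_aux[OF assms(2,1)] .
  have c2: "comp C phi i2 = j2" unfolding phi_def using biprod_aux[OF b1(2,1)] plus_comm comp_Hom h k by metis
  have "comp C psi phi = plus C (comp C psi (comp C j1 p1)) (comp C psi (comp C j2 p2))"
    unfolding phi_def using distL[OF comp_Hom[OF h(6) k(2)] comp_Hom[OF h(7) k(3)] psi] .
  also have "\<dots> = idm C W" using assoc[OF h(6) k(2) psi] assoc[OF h(7) k(3) psi] a1 a2 h(8) by simp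
  finally have 1: "comp C psi phi = idm C W" .
  have "comp C phi psi = plus C (comp C phi (comp C i1 q1)) (comp C phi (comp C i2 q2))"
    unfolding psi_def using distL[OF comp_Hom[OF k(4) h(4)] comp_Hom[OF k(5) h(5)] phi] .
  also have "\<dots> = idm C W'" using assoc[OF k(4) h(4) phi] assoc[OF k(5) h(5) phi] c1 c2 k(6) by simp
  finally have 2: "comp C phi psi = idm C W'" .
  show ?thesis unfolding iso_def using 1 2 phi psi by blast
qed

lemma TRs: "(\<forall>T\<in>Tri C. is_triangle C T) \<and>
     (\<forall>X Y Z u v w X' Y' Z' u' v' w' a b c.
        (X, Y, Z, u, v, w) \<in> Tri C \<longrightarrow> is_triangle C (X', Y', Z', u', v', w') \<longrightarrow>
        a \<in> Hom C X X' \<longrightarrow> b \<in> Hom C Y Y' \<longrightarrow> c \<in> Hom C Z Z' \<longrightarrow>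
        is_iso_arr C a \<longrightarrow> is_iso_arr C b \<longrightarrow> is_iso_arr C c \<longrightarrow>
        comp C b u = comp C u' a \<longrightarrow> comp C c v = comp C v' b \<longrightarrow>
        comp C (SigA C a) w = comp C w' c \<longrightarrow>
        (X', Y', Z', u', v', w') \<in> Tri C) \<and>
     (\<forall>X\<in>Ob C. \<forall>z. is_zero C z \<longrightarrow>
        (X, X, z, idm C X, zer C X z, zer C z (Sig C X)) \<in> Tri C) \<and>
     (\<forall>X Y u. u \<in> Hom C X Y \<longrightarrow> (\<exists>Z v w. (X, Y, Z, u, v, w) \<in> Tri C)) \<and>
     (\<forall>X Y Z u v w. (X, Y, Z, u, v, w) \<in> Tri C \<longrightarrow>
        (Y, Z, Sig C X, v, w, neg C (SigA C u)) \<in> Tri C) \<and>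
     (\<forall>X Y Z u v w X' Y' Z' u' v' w' a b.
        (X, Y, Z, u, v, w) \<in> Tri C \<longrightarrow> (X', Y', Z', u', v', w') \<in> Tri C \<longrightarrow>
        a \<in> Hom C X X' \<longrightarrow> b \<in> Hom C Y Y' \<longrightarrow> comp C b u = comp C u' a \<longrightarrow>
        (\<exists>c\<in>Hom C Z Z'. comp C c v = comp C v' b \<and> comp C (SigA C a) w = comp C w' c))"
  using tri unfolding triangulated_def by (elim conjE) (intro conjI; assumption)

lemma Tri_is: "T \<in> Tri C \<Longrightarrow> is_triangle C T"
  using conjunct1[OF TRs] by blast
lemmas TR1iso = conjunct1[OF conjunct2[OF TRs], rule_format]
lemmas TR1zero = conjunct1[OF conjunct2[OF conjunct2[OF TRs]], rule_format]
lemmas TR2 = conjunct1[OF conjunct2[OF conjunct2[OF conjunct2[OF conjunct2[OF TRs]]]], rule_format]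
lemmas TR3 = conjunct2[OF conjunct2[OF conjunct2[OF conjunct2[OF conjunct2[OF TRs]]]], rule_format]

lemma iso_arr_I: "f \<in> Hom C x y \<Longrightarrow> g \<in> Hom C y x \<Longrightarrow> comp C g f = idm C x \<Longrightarrow> comp C f g = idm C y \<Longrightarrow> is_iso_arr C f"
  unfolding is_iso_arr_def using HomD by metis

lemma zero_ob: "is_zero C z \<Longrightarrow> z \<in> Ob C" unfolding is_zero_def by blast

lemma tri_zero: assumes A: "A \<in> Ob C" and z: "is_zero C z"
  shows "(z, A, A, zer C z A, idm C A, zer C A (Sig C z)) \<in> Tri C"
proof -
  have zo: "z \<in> Ob C" using zero_ob z .
  obtain B f g where B: "B \<in> Ob C" and f: "f \<in> Hom C (Sig C B) A" "g \<in> Hom C A (Sig C B)"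
     "comp C g f = idm C (Sig C B)" "comp C f g = idm C A"
    using Sig_ess[OF A] unfolding iso_def by blast
  have SB: "Sig C B \<in> Ob C" using Sig_Ob B .
  have Sz: "Sig C z \<in> Ob C" using Sig_Ob zo .
  have T1: "(B, B, z, idm C B, zer C B z, zer C z (Sig C B)) \<in> Tri C" using TR1zero B z by blast
  have T2: "(B, z, Sig C B, zer C B z, zer C z (Sig C B), neg C (idm C (Sig C B))) \<in> Tri C"
    using TR2[OF T1] SigA_id[OF B] by simp
  have T3: "(z, Sig C B, Sig C B, zer C z (Sig C B), neg C (idm C (Sig C B)), zer C (Sig C B) (Sig C z)) \<in> Tri C"
    using TR2[OF T2] SigA_zer[OF B zo] neg_zer[OF SB Sz] by simp
  have nf: "neg C f \<in> Hom C (Sig C B) A" using neg_Hom f(1) .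
  have ng: "neg C g \<in> Hom C A (Sig C B)" using neg_Hom f(2) .
  have "comp C (neg C g) (neg C f) = idm C (Sig C B)"
    using comp_neg_l[OF f(2) nf] comp_neg_r[OF f(2) f(1)] neg_neg[OF comp_Hom[OF f(1) f(2)]] f(3) by simp
  moreover have "comp C (neg C f) (neg C g) = idm C A"
    using comp_neg_l[OF f(1) ng] comp_neg_r[OF f(1) f(2)] neg_neg[OF comp_Hom[OF f(2) f(1)]] f(4) by simp
  ultimately have isc: "is_iso_arr C (neg C f)" using iso_arr_I nf ng by blast
  have isb: "is_iso_arr C f" using iso_arr_I f by blast
  have isa: "is_iso_arr C (idm C z)" using iso_arr_I id_Hom[OF zo] comp_id_r[OF id_Hom[OF zo]] by blast
  have istri: "is_triangle C (z, A, A, zer C z A, idm C A, zer C A (Sig C z))"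
    unfolding is_triangle_def using zer_Hom zo A Sz id_Hom by simp
  have e1: "comp C f (zer C z (Sig C B)) = comp C (zer C z A) (idm C z)"
    using comp_zer_r[OF f(1) zo] comp_id_r[OF zer_Hom[OF zo A]] by simp
  have e2: "comp C (neg C f) (neg C (idm C (Sig C B))) = comp C (idm C A) f"
    using comp_neg_r[OF nf id_Hom[OF SB]] comp_id_r[OF nf] neg_neg[OF f(1)] comp_id_l[OF f(1)] by simp
  have e3: "comp C (SigA C (idm C z)) (zer C (Sig C B) (Sig C z)) = comp C (zer C A (Sig C z)) (neg C f)"
    using SigA_id[OF zo] comp_id_l[OF zer_Hom[OF SB Sz]] comp_zer_l[OF nf Sz] by simp
  show ?thesis using TR1iso[OF T3 istri id_Hom[OF zo] f(1) nf isa isb isc e1 e2 e3] .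
qed

lemma exact: assumes T: "(U, V, W, phi, v, w) \<in> Tri C" and g: "g \<in> Hom C W Z'"
  and gv: "comp C g v = zer C V Z'"
  shows "\<exists>h\<in>Hom C (Sig C U) Z'. comp C h w = g"
proof -
  obtain z where z: "is_zero C z" using zero_ex by blast
  have zo: "z \<in> Ob C" using zero_ob z .
  have tT: "v \<in> Hom C V W" using Tri_is[OF T] unfolding is_triangle_def by simp
  have Vo: "V \<in> Ob C" and Zo: "Z' \<in> Ob C" using Hom_ob tT g by auto
  have R: "(V, W, Sig C U, v, w, neg C (SigA C phi)) \<in> Tri C" using TR2[OF T] .
  have Z: "(z, Z', Z', zer C z Z', idm C Z', zer C Z' (Sig C z)) \<in> Tri C" using tri_zero[OF Zo z] .
  have e: "comp C g v = comp C (zer C z Z') (zer C V z)" using gv comp_zer_l[OF zer_Hom[OF Vo zo] Zo] by simp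
  obtain c where c: "c \<in> Hom C (Sig C U) Z'" "comp C c w = comp C (idm C Z') g"
    using TR3[OF R Z zer_Hom[OF Vo zo] g e] by blast
  thus ?thesis using comp_id_l[OF g] by auto
qed

lemma biprodD: "biprod C A B W i1 i2 p1 p2 \<Longrightarrow> A \<in> Ob C \<and> B \<in> Ob C \<and> W \<in> Ob C"
  unfolding biprod_def by blast

lemma addc_Ob: "w \<in> addc C Xs \<Longrightarrow> w \<in> Ob C"
  by (induction rule: addc.induct) (auto dest: zero_ob biprodD)

lemma addc_sub: assumes "Xs \<subseteq> addc C Ys" "w \<in> addc C Xs" shows "w \<in> addc C Ys"
  using assms(2)
proof (induction rule: addc.induct)
  case (zero z) thus ?case by (rule addc.zero)
next
  case (base x) thus ?case using assms(1) by blast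
next
  case (sum A B W i1 i2 p1 p2) show ?case by (rule addc.sum[OF sum.IH(1) sum.IH(2) sum.hyps(3)])
next
  case (summand W A B i1 i2 p1 p2) show ?case by (rule addc.summand[OF summand.IH summand.hyps(2)])
qed

lemma thick_Ob: "W \<in> thick C X k \<Longrightarrow> W \<in> Ob C"
  by (cases "(C,X,k)" rule: thick.cases) (auto intro: addc_Ob)

lemma zero_thick: "is_zero C z \<Longrightarrow> z \<in> thick C X k"
  by (cases "(C,X,k)" rule: thick.cases) (auto intro: addc.zero)

lemma thick_Suc: assumes W: "W \<in> thick C X (Suc m)" shows "W \<in> thick C X (Suc (Suc m))"
proof -
  obtain z where z: "is_zero C z" using zero_ex by blast
  have Wo: "W \<in> Ob C" using thick_Ob W .
  have "W \<in> cones C z W" unfolding cones_def using tri_zero[OF Wo z] zer_Hom[OF zero_ob[OF z] Wo] by blast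
  moreover have "z \<in> thick C X (Suc 0)" using zero_thick z .
  ultimately have "W \<in> {Z. \<exists>U V. U \<in> thick C X (Suc 0) \<and> V \<in> thick C X (Suc m) \<and> Z \<in> cones C U V}"
    using W by blast
  thus ?thesis using Wo by (simp add: addc.base)
qed

lemma thick_mono: assumes "1 \<le> a" "a \<le> b" shows "thick C X a \<subseteq> thick C X b"
  using assms(2)
proof (induction b rule: dec_induct)
  case (step b)
  from step(1) assms(1) obtain m where "b = Suc m" by (cases b) auto
  thus ?case using step thick_Suc by blast
qed simp

definition QQ where "QQ Z = {Z' \<in> Ob C. \<exists>a b. iso C (S a Z') (S b Z)}"
definition PP where "PP W Z \<longleftrightarrow> (\<forall>Z'\<in>QQ Z. \<forall>f\<in>Hom C W Z'. f = zer C W Z')"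

lemma Q_shifts: assumes Z: "Z \<in> Ob C" and Q: "Z' \<in> QQ Z" shows "\<exists>i. Z' \<in> shifts C i Z"
proof -
  obtain a b where Z': "Z' \<in> Ob C" and ab: "iso C (S a Z') (S b Z)" using Q unfolding QQ_def by blast
  show ?thesis
  proof (cases "a \<le> b")
    case True
    have "S b Z = S a (S (b - a) Z)" using S_add True by simp
    hence "iso C Z' (S (b - a) Z)" using iso_SA_refl ab Z' S_Ob Z by metis
    hence "Z' \<in> shifts C (int (b - a)) Z" unfolding shifts_def using Z' by simp
    thus ?thesis by blast
  next
    case False
    have "S a Z' = S b (S (a - b) Z')" using S_add False by simp
    hence "iso C (S b (S (a - b) Z')) (S b (S 0 Z))" using ab by simp
    hence "iso C (S (a - b) Z') Z" using iso_SA_refl S_Ob Z Z' by (metis funpow_0)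
    moreover have "nat (int a - int b) = a - b" using False by simp
    ultimately have "Z' \<in> shifts C (- int (a - b)) Z" unfolding shifts_def using Z' False by simp
    thus ?thesis by blast
  qed
qed

lemma shifts_Q: assumes "Z' \<in> shifts C i Z" shows "Z' \<in> QQ Z"
proof (cases "0 \<le> i")
  case True
  hence "Z' \<in> Ob C" "iso C (S 0 Z') (S (nat i) Z)" using assms unfolding shifts_def by auto
  thus ?thesis unfolding QQ_def by blast
next
  case False
  hence "Z' \<in> Ob C" "iso C (S (nat (-i)) Z') (S 0 Z)" using assms unfolding shifts_def by auto
  thus ?thesis unfolding QQ_def by blast
qed

lemma Q_Ob: "Z' \<in> QQ Z \<Longrightarrow> Z' \<in> Ob C" unfolding QQ_def by blast

lemma Q_SA: assumes "Z' \<in> QQ Z" shows "S k Z' \<in> QQ Z"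
proof -
  obtain a b where Z': "Z' \<in> Ob C" and ab: "iso C (S a Z') (S b Z)" using assms unfolding QQ_def by blast
  have "iso C (S k (S a Z')) (S k (S b Z))" using iso_SA ab .
  moreover have "S k (S a Z') = S a (S k Z')" using S_add by (simp add: add.commute)
  ultimately have "iso C (S a (S k Z')) (S (k + b) Z)" using S_add by simp
  thus ?thesis unfolding QQ_def using S_Ob Z' by blast
qed

lemma Q_desusp: assumes "Z' \<in> QQ Z" shows "\<exists>Z''\<in>QQ Z. iso C (S k Z'') Z'"
proof -
  obtain a b where Z': "Z' \<in> Ob C" and ab: "iso C (S a Z') (S b Z)" using assms unfolding QQ_def by blast
  obtain Z'' where Z'': "Z'' \<in> Ob C" "iso C (S k Z'') Z'" using S_ess Z' by blast
  have "iso C (S a (S k Z'')) (S a Z')" using iso_SA Z'' by blast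
  hence "iso C (S (a + k) Z'') (S b Z)" using iso_trans ab S_add by metis
  thus ?thesis unfolding QQ_def using Z'' by blast
qed

lemma PP_iso: assumes i: "iso C W W'" and P: "PP W' Z" shows "PP W Z"
  unfolding PP_def
proof (intro ballI)
  fix Z' f assume Z': "Z' \<in> QQ Z" and f: "f \<in> Hom C W Z'"
  obtain a b where ab: "a \<in> Hom C W W'" "b \<in> Hom C W' W" "comp C b a = idm C W"
    using i unfolding iso_def by blast
  have Zo: "Z' \<in> Ob C" using Q_Ob Z' .
  have "comp C f b = zer C W' Z'" using P Z' comp_Hom[OF ab(2) f] unfolding PP_def by blast
  hence "comp C (comp C f b) a = zer C W Z'" using comp_zer_l[OF ab(1) Zo] by simp
  thus "f = zer C W Z'" using assoc[OF ab(1) ab(2) f] ab(3) comp_id_r[OF f] by simp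
qed

lemma PP_SA_refl: assumes P: "PP (S k W) Z" and W: "W \<in> Ob C" shows "PP W Z"
  unfolding PP_def
proof (intro ballI)
  fix Z' f assume Z': "Z' \<in> QQ Z" and f: "f \<in> Hom C W Z'"
  have Zo: "Z' \<in> Ob C" using Q_Ob Z' .
  have "SA k f = zer C (S k W) (S k Z')" using P Q_SA[OF Z'] SA_Hom[OF f] unfolding PP_def by blast
  hence "SA k f = SA k (zer C W Z')" using SA_zer[OF W Zo] by simp
  thus "f = zer C W Z'" using SA_inj f zer_Hom[OF W Zo] by blast
qed

lemma PP_SA: assumes P: "PP W Z" and W: "W \<in> Ob C" shows "PP (S k W) Z"
  unfolding PP_def
proof (intro ballI)
  fix Z' f assume Z': "Z' \<in> QQ Z" and f: "f \<in> Hom C (S k W) Z'"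
  have Zo: "Z' \<in> Ob C" using Q_Ob Z' .
  obtain Z'' where Z'': "Z'' \<in> QQ Z" "iso C (S k Z'') Z'" using Q_desusp Z' by blast
  have Zo'': "Z'' \<in> Ob C" using Q_Ob Z''(1) .
  obtain a b where ab: "a \<in> Hom C (S k Z'') Z'" "b \<in> Hom C Z' (S k Z'')" "comp C a b = idm C Z'"
    using Z''(2) unfolding iso_def by blast
  have bf: "comp C b f \<in> Hom C (S k W) (S k Z'')" using comp_Hom f ab(2) by blast
  obtain h where h: "h \<in> Hom C W Z''" "SA k h = comp C b f" using SA_surj[OF bf W Zo''] by blast
  have "h = zer C W Z''" using P Z''(1) h(1) unfolding PP_def by blast
  hence "comp C b f = zer C (S k W) (S k Z'')" using h(2) SA_zer[OF W Zo''] by simp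
  hence "comp C a (comp C b f) = zer C (S k W) Z'" using comp_zer_r[OF ab(1) S_Ob[OF W]] by simp
  thus "f = zer C (S k W) Z'" using assoc[OF f ab(2) ab(1)] ab(3) comp_id_l[OF f] by simp
qed

lemma PP_addc: assumes X: "\<forall>x\<in>Xs. PP x Z" and w: "w \<in> addc C Xs" shows "PP w Z"
  using w
proof (induction rule: addc.induct)
  case (zero z)
  show ?case unfolding PP_def using zero Q_Ob unfolding is_zero_def by blast
next
  case (base x) thus ?case using X by blast
next
  case (sum A B W i1 i2 p1 p2)
  from sum.hyps(3) have h: "A \<in> Ob C" "B \<in> Ob C" "W \<in> Ob C"
     "i1 \<in> Hom C A W" "i2 \<in> Hom C B W" "p1 \<in> Hom C W A" "p2 \<in> Hom C W B"
     "plus C (comp C i1 p1) (comp C i2 p2) = idm C W" unfolding biprod_def by auto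
  show ?case unfolding PP_def
  proof (intro ballI)
    fix Z' f assume Z': "Z' \<in> QQ Z" and f: "f \<in> Hom C W Z'"
    have Zo: "Z' \<in> Ob C" using Q_Ob Z' .
    have 1: "comp C f i1 = zer C A Z'" using sum.IH(1) Z' comp_Hom[OF h(4) f] unfolding PP_def by blast
    have 2: "comp C f i2 = zer C B Z'" using sum.IH(2) Z' comp_Hom[OF h(5) f] unfolding PP_def by blast
    have "f = comp C f (plus C (comp C i1 p1) (comp C i2 p2))" using h(8) comp_id_r[OF f] by simp
    also have "\<dots> = plus C (comp C f (comp C i1 p1)) (comp C f (comp C i2 p2))"
      using distL[OF comp_Hom[OF h(6) h(4)] comp_Hom[OF h(7) h(5)] f] .
    also have "comp C f (comp C i1 p1) = zer C W Z'"
      using assoc[OF h(6) h(4) f] 1 comp_zer_l[OF h(6) Zo] by simp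
    also have "comp C f (comp C i2 p2) = zer C W Z'"
      using assoc[OF h(7) h(5) f] 2 comp_zer_l[OF h(7) Zo] by simp
    finally show "f = zer C W Z'" using plus_zer[OF zer_Hom[OF h(3) Zo]] by simp
  qed
next
  case (summand W A B i1 i2 p1 p2)
  from summand.hyps(2) have h: "A \<in> Ob C"
     "i1 \<in> Hom C A W" "p1 \<in> Hom C W A" "comp C p1 i1 = idm C A" unfolding biprod_def by auto
  show ?case unfolding PP_def
  proof (intro ballI)
    fix Z' f assume Z': "Z' \<in> QQ Z" and f: "f \<in> Hom C A Z'"
    have Zo: "Z' \<in> Ob C" using Q_Ob Z' .
    have 1: "comp C f p1 = zer C W Z'" using summand.IH Z' comp_Hom[OF h(3) f] unfolding PP_def by blast
    have "f = comp C f (comp C p1 i1)" using h(4) comp_id_r[OF f] by simp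
    also have "\<dots> = zer C A Z'" using assoc[OF h(2) h(3) f] 1 comp_zer_l[OF h(2) Zo] by simp
    finally show "f = zer C A Z'" .
  qed
qed

lemma PP_thick1: assumes P: "PP X Z" and X: "X \<in> Ob C" and W: "W \<in> thick C X (Suc 0)" shows "PP W Z"
proof -
  have "\<forall>x\<in>(\<Union>i. shifts C i X). PP x Z"
  proof
    fix x assume "x \<in> (\<Union>i. shifts C i X)"
    then obtain i where x: "x \<in> shifts C i X" by blast
    show "PP x Z"
    proof (cases "0 \<le> i")
      case True
      hence "iso C x (S (nat i) X)" using x unfolding shifts_def by simp
      thus ?thesis using PP_iso PP_SA[OF P X] by blast
    next
      case False
      hence "iso C (S (nat (-i)) x) X" "x \<in> Ob C" using x unfolding shifts_def by auto
      thus ?thesis using PP_iso P PP_SA_refl by blast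
    qed
  qed
  moreover have "W \<in> addc C (\<Union>i. shifts C i X)" using W by simp
  ultimately show ?thesis using PP_addc by blast
qed

lemma PP_thick: assumes P: "PP X Z" and X: "X \<in> Ob C" shows "W \<in> thick C X (Suc m) \<Longrightarrow> PP W Z"
proof (induction m arbitrary: W)
  case 0 thus ?case using PP_thick1[OF P X] by simp
next
  case (Suc m)
  have "\<forall>x\<in>{Z. \<exists>U V. U \<in> thick C X (Suc 0) \<and> V \<in> thick C X (Suc m) \<and> Z \<in> cones C U V}. PP x Z"
  proof
    fix x assume "x \<in> {Z. \<exists>U V. U \<in> thick C X (Suc 0) \<and> V \<in> thick C X (Suc m) \<and> Z \<in> cones C U V}"
    then obtain U V phi v w where U: "U \<in> thick C X (Suc 0)" and V: "V \<in> thick C X (Suc m)"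
      and T: "(U, V, x, phi, v, w) \<in> Tri C" unfolding cones_def by blast
    have PU: "PP U Z" using PP_thick1[OF P X U] .
    have PV: "PP V Z" using Suc.IH[OF V] .
    have Uo: "U \<in> Ob C" using thick_Ob U .
    have PSU: "PP (Sig C U) Z" using PP_SA[OF PU Uo, of "Suc 0"] by simp
    have tT: "v \<in> Hom C V x" "w \<in> Hom C x (Sig C U)" using Tri_is[OF T] unfolding is_triangle_def by auto
    show "PP x Z" unfolding PP_def
    proof (intro ballI)
      fix Z' f assume Z': "Z' \<in> QQ Z" and f: "f \<in> Hom C x Z'"
      have Zo: "Z' \<in> Ob C" using Q_Ob Z' .
      have "comp C f v = zer C V Z'" using PV Z' comp_Hom[OF tT(1) f] unfolding PP_def by blast
      from exact[OF T f this] obtain h where h: "h \<in> Hom C (Sig C U) Z'" "comp C h w = f" by blast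
      have "h = zer C (Sig C U) Z'" using PSU Z' h(1) unfolding PP_def by blast
      thus "f = zer C x Z'" using h(2) comp_zer_l[OF tT(2) Zo] by simp
    qed
  qed
  moreover have "W \<in> addc C {Z. \<exists>U V. U \<in> thick C X (Suc 0) \<and> V \<in> thick C X (Suc m) \<and> Z \<in> cones C U V}"
    using Suc.prems by simp
  ultimately show ?case using PP_addc by blast
qed

lemma no_hom_zero: assumes X: "X \<in> Ob C" and Z: "Z \<in> thick C X (Suc m)"
  and nh: "\<forall>i. \<not> hom_nz C X i Z" shows "is_zero C Z"
proof -
  have Zo: "Z \<in> Ob C" using thick_Ob Z .
  have PX: "PP X Z" unfolding PP_def
  proof (intro ballI)
    fix Z' f assume Z': "Z' \<in> QQ Z" and f: "f \<in> Hom C X Z'"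
    obtain i where "Z' \<in> shifts C i Z" using Q_shifts[OF Zo Z'] by blast
    thus "f = zer C X Z'" using nh f unfolding hom_nz_def by blast
  qed
  have PZ: "PP Z Z" using PP_thick[OF PX X Z] .
  have ZQ: "Z \<in> QQ Z" unfolding QQ_def using iso_refl[OF Zo] Zo by (metis (mono_tags, lifting) funpow_0 mem_Collect_eq)
  have idz: "idm C Z = zer C Z Z" using PZ ZQ id_Hom[OF Zo] unfolding PP_def by blast
  have "\<forall>x\<in>Ob C. Hom C Z x = {zer C Z x} \<and> Hom C x Z = {zer C x Z}"
  proof (intro ballI conjI)
    fix x assume xo: "x \<in> Ob C"
    show "Hom C Z x = {zer C Z x}"
    proof
      show "Hom C Z x \<subseteq> {zer C Z x}"
      proof
        fix f assume f: "f \<in> Hom C Z x"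
        have "f = comp C f (idm C Z)" using comp_id_r[OF f] by simp
        also have "\<dots> = zer C Z x" using idz comp_zer_r[OF f Zo] by simp
        finally show "f \<in> {zer C Z x}" by simp
      qed
    qed (simp add: zer_Hom[OF Zo xo])
    show "Hom C x Z = {zer C x Z}"
    proof
      show "Hom C x Z \<subseteq> {zer C x Z}"
      proof
        fix f assume f: "f \<in> Hom C x Z"
        have "f = comp C (idm C Z) f" using comp_id_l[OF f] by simp
        also have "\<dots> = zer C x Z" using idz comp_zer_l[OF f Zo] by simp
        finally show "f \<in> {zer C x Z}" by simp
      qed
    qed (simp add: zer_Hom[OF xo Zo])
  qed
  thus ?thesis unfolding is_zero_def using Zo by blast
qed

lemma shifts_sub: assumes b: "biprod C X (S n X) Y i1 i2 p1 p2" and Z: "Z \<in> shifts C i X"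
  shows "Z \<in> addc C (\<Union>i. shifts C i Y)"
proof (cases "0 \<le> i")
  case True
  define k where "k = nat i"
  have iz: "iso C Z (S k X)" using Z True unfolding shifts_def k_def by simp
  have bk: "biprod C (S k X) (S k (S n X)) (S k Y) (SA k i1) (SA k i2) (SA k p1) (SA k p2)"
    using biprod_SA[OF b] .
  obtain j1 q1 where bz: "biprod C Z (S k (S n X)) (S k Y) j1 (SA k i2) q1 (SA k p2)"
    using biprod_tr1_iso[OF bk iz] by blast
  have Yo: "S k Y \<in> Ob C" using biprodD[OF bk] by blast
  have "S k Y \<in> shifts C i Y" unfolding shifts_def using True Yo iso_refl[OF Yo] k_def by simp
  hence "S k Y \<in> (\<Union>i. shifts C i Y)" by blast
  from addc.summand[OF addc.base[OF this Yo] bz] show ?thesis .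
next
  case False
  define m where "m = nat (-i)"
  have iz: "iso C (S m Z) X" and Zo: "Z \<in> Ob C" using Z False unfolding shifts_def m_def by auto
  obtain W j1 j2 q1 q2 where bW: "biprod C Z (S n Z) W j1 j2 q1 q2" using biprod_ex[OF Zo S_Ob[OF Zo]] by blast
  have bm: "biprod C (S m Z) (S m (S n Z)) (S m W) (SA m j1) (SA m j2) (SA m q1) (SA m q2)"
    using biprod_SA[OF bW] .
  obtain a1 b1 where b1: "biprod C X (S m (S n Z)) (S m W) a1 (SA m j2) b1 (SA m q2)"
    using biprod_tr1_iso[OF bm iso_sym[OF iz]] by blast
  have "S m (S n Z) = S n (S m Z)" using S_add by (simp add: add.commute)
  moreover have "iso C (S n X) (S n (S m Z))" using iso_SA[OF iso_sym[OF iz]] .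
  ultimately have b1': "biprod C X (S n (S m Z)) (S m W) a1 (SA m j2) b1 (SA m q2)" 
    "iso C (S n X) (S n (S m Z))" using b1 by simp_all
  obtain a2 b2 where b2: "biprod C X (S n X) (S m W) a1 a2 b1 b2"
    using biprod_tr2_iso[OF b1'] by blast
  have "iso C (S m W) Y" using biprod_iso[OF b2 b] .
  moreover have Wo: "W \<in> Ob C" using biprodD[OF bW] by blast
  ultimately have "W \<in> shifts C i Y" unfolding shifts_def using False m_def by simp
  hence "W \<in> (\<Union>i. shifts C i Y)" by blast
  from addc.summand[OF addc.base[OF this Wo] bW] show ?thesis .
qed

lemma cones_Ob: assumes "x \<in> cones C U V" shows "x \<in> Ob C"
proof -
  obtain phi v w where "(U, V, x, phi, v, w) \<in> Tri C" using assms unfolding cones_def by blast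
  hence "w \<in> Hom C x (Sig C U)" using Tri_is unfolding is_triangle_def by fastforce
  thus ?thesis using Hom_ob by blast
qed

lemma thick_gen: assumes b: "biprod C X (S n X) Y i1 i2 p1 p2"
  shows "thick C X (Suc m) \<subseteq> thick C Y (Suc m)"
proof (induction m)
  case 0
  have "(\<Union>i. shifts C i X) \<subseteq> addc C (\<Union>i. shifts C i Y)" using shifts_sub[OF b] by blast
  thus ?case using addc_sub by auto
next
  case (Suc m)
  have b1: "thick C X (Suc 0) \<subseteq> thick C Y (Suc 0)"
  proof -
    have "(\<Union>i. shifts C i X) \<subseteq> addc C (\<Union>i. shifts C i Y)" using shifts_sub[OF b] by blast
    thus ?thesis using addc_sub by auto
  qed
  have "{Z. \<exists>U V. U \<in> thick C X (Suc 0) \<and> V \<in> thick C X (Suc m) \<and> Z \<in> cones C U V}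
     \<subseteq> addc C {Z. \<exists>U V. U \<in> thick C Y (Suc 0) \<and> V \<in> thick C Y (Suc m) \<and> Z \<in> cones C U V}"
  proof
    fix x assume "x \<in> {Z. \<exists>U V. U \<in> thick C X (Suc 0) \<and> V \<in> thick C X (Suc m) \<and> Z \<in> cones C U V}"
    then obtain U V where "U \<in> thick C X (Suc 0)" "V \<in> thick C X (Suc m)" "x \<in> cones C U V" by blast
    hence "x \<in> {Z. \<exists>U V. U \<in> thick C Y (Suc 0) \<and> V \<in> thick C Y (Suc m) \<and> Z \<in> cones C U V}"
      using b1 Suc.IH by blast
    thus "x \<in> addc C {Z. \<exists>U V. U \<in> thick C Y (Suc 0) \<and> V \<in> thick C Y (Suc m) \<and> Z \<in> cones C U V}"
      by (rule addc.base[OF _ cones_Ob[OF \<open>x \<in> cones C U V\<close>]])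
  qed
  thus ?case using addc_sub by auto
qed

lemma nz_comp: assumes f: "f \<in> Hom C A Z'" "f \<noteq> zer C A Z'" and b: "i \<in> Hom C A Y" "p \<in> Hom C Y A" "comp C p i = idm C A"
  shows "comp C f p \<in> Hom C Y Z' \<and> comp C f p \<noteq> zer C Y Z'"
proof
  show "comp C f p \<in> Hom C Y Z'" using comp_Hom b(2) f(1) by blast
  show "comp C f p \<noteq> zer C Y Z'"
  proof
    assume "comp C f p = zer C Y Z'"
    hence "comp C (comp C f p) i = zer C A Z'" using comp_zer_l[OF b(1)] Hom_ob f(1) by simp
    thus False using assoc[OF b(1) b(2) f(1)] b(3) comp_id_r[OF f(1)] f(2) by simp
  qed
qed

lemma hom_nz_Y1: assumes b: "biprod C X (S n X) Y i1 i2 p1 p2" and h: "hom_nz C X i Z"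
  shows "hom_nz C Y i Z"
proof -
  obtain Z' f where Z': "Z' \<in> shifts C i Z" and f: "f \<in> Hom C X Z'" "f \<noteq> zer C X Z'"
    using h unfolding hom_nz_def by blast
  have "i1 \<in> Hom C X Y" "p1 \<in> Hom C Y X" "comp C p1 i1 = idm C X" using b unfolding biprod_def by auto
  from nz_comp[OF f this] Z' show ?thesis unfolding hom_nz_def by blast
qed

lemma hom_nz_Y2: assumes b: "biprod C X (S n X) Y i1 i2 p1 p2" and h: "hom_nz C X i Z"
  shows "hom_nz C Y (i + int n) Z"
proof -
  obtain Z' f where Z': "Z' \<in> shifts C i Z" and f: "f \<in> Hom C X Z'" "f \<noteq> zer C X Z'"
    using h unfolding hom_nz_def by blast
  have Xo: "X \<in> Ob C" and Zo: "Z' \<in> Ob C" using Hom_ob f(1) by auto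
  have f2: "SA n f \<in> Hom C (S n X) (S n Z')" using SA_Hom f(1) .
  have f3: "SA n f \<noteq> zer C (S n X) (S n Z')"
  proof
    assume "SA n f = zer C (S n X) (S n Z')"
    hence "SA n f = SA n (zer C X Z')" using SA_zer[OF Xo Zo] by simp
    thus False using SA_inj f zer_Hom[OF Xo Zo] by blast
  qed
  have Zs: "S n Z' \<in> shifts C (i + int n) Z"
  proof (cases "0 \<le> i")
    case True
    hence "iso C Z' (S (nat i) Z)" using Z' unfolding shifts_def by simp
    hence "iso C (S n Z') (S n (S (nat i) Z))" using iso_SA by blast
    moreover have "nat (i + int n) = n + nat i" using True by simp
    hence "S n (S (nat i) Z) = S (nat (i + int n)) Z" using S_add by simp
    ultimately show ?thesis unfolding shifts_def using True S_Ob[OF Zo] by simp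
  next
    case False
    hence iz: "iso C (S (nat (-i)) Z') Z" using Z' unfolding shifts_def by simp
    show ?thesis
    proof (cases "0 \<le> i + int n")
      case True
      have "n = nat (i + int n) + nat (-i)" using True False by simp
      hence e: "S n Z' = S (nat (i + int n)) (S (nat (-i)) Z')" using S_add[of "nat (i + int n)" "nat (-i)" Z'] by simp
      have "iso C (S n Z') (S (nat (i + int n)) Z)" unfolding e using iso_SA[OF iz] .
      thus ?thesis unfolding shifts_def using True S_Ob[OF Zo] by simp
    next
      case F2: False
      have "nat (-(i + int n)) + n = nat (-i)" using F2 False by simp
      hence "S (nat (- (i + int n))) (S n Z') = S (nat (-i)) Z'" using S_add[of "nat (- (i + int n))" n Z'] by simp
      thus ?thesis unfolding shifts_def using F2 S_Ob[OF Zo] iz by simp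
    qed
  qed
  have "i2 \<in> Hom C (S n X) Y" "p2 \<in> Hom C Y (S n X)" "comp C p2 i2 = idm C (S n X)" using b unfolding biprod_def by auto
  from nz_comp[OF f2 f3 this] Zs show ?thesis unfolding hom_nz_def by blast
qed

lemma main_incl: assumes X: "X \<in> Ob C" and th: "thick C X (n + 1) = Ob C"
  and b: "biprod C X (S n X) Y i1 i2 p1 p2"
  shows "homset C Y p \<subseteq> thick C Y p"
proof
  fix Z assume "Z \<in> homset C Y p"
  hence Zo: "Z \<in> Ob C" and hl: "hle C Y Z p" unfolding homset_def by auto
  have ZX: "Z \<in> thick C X (Suc n)" using th Zo by simp
  show "Z \<in> thick C Y p"
  proof (cases "\<exists>i. hom_nz C X i Z")
    case True
    then obtain i where i: "hom_nz C X i Z" by blast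
    have "\<bar>i - (i + int n)\<bar> < int p" using hl hom_nz_Y1[OF b i] hom_nz_Y2[OF b i] unfolding hle_def by blast
    hence np: "Suc n \<le> p" by simp
    have "Z \<in> thick C Y (Suc n)" using thick_gen[OF b] ZX by blast
    moreover have "thick C Y (Suc n) \<subseteq> thick C Y p" using thick_mono[of "Suc n" p] np by simp
    ultimately show ?thesis by blast
  next
    case False
    hence "is_zero C Z" using no_hom_zero[OF X ZX] by blast
    thus ?thesis using zero_thick by blast
  qed
qed

end

theorem mainTheorem4:
  fixes C :: "('o, 'm) tcat" and X Y :: 'o and n :: nat and i1 i2 p1 p2 :: 'm
  assumes "triangulated C"
    and "X \<in> Ob C"
    and "thick C X (n + 1) = Ob C"
    and "biprod C X ((Sig C ^^ n) X) Y i1 i2 p1 p2"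
  shows "(\<forall>p. homset C Y p \<subseteq> thick C Y p) \<and>
         ((\<forall>Z\<in>Ob C. homologically_finite C Z) \<longrightarrow> finitistic_generator C Y)"
proof -
  interpret TC C using assms(1) by (rule TC.intro)
  have 1: "\<forall>p. homset C Y p \<subseteq> thick C Y p" using main_incl[OF assms(2,3,4)] by blast
  have Yo: "Y \<in> Ob C" using biprodD[OF assms(4)] by blast
  show ?thesis using 1 Yo unfolding finitistic_generator_def by blast
qed

end
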